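(* Let $T$ be a tree on $n \geq 3$ vertices. Then $T$ is saturated if and only if $T = K_{1,n-1}$.
   Context: All graphs are finite and simple. A degree monotone path in a graph $G$ is a path $v_1v_2\ldots v_m$ such that $\deg(v_1)\le \cdots\le \deg(v_m)$ or $\deg(v_1)\ge \cdots\ge \deg(v_m)$; its length is its number of vertices. $mp(G)$ denotes the maximum length of a degree monotone path in $G$. A graph $G$ is saturated if $mp(G+e)>mp(G)$ for every pair $e$ of non-adjacent vertices of $G$, where $G+e$ is $G$ with the edge $e$ added. *)

theory Defs
  imports Main
begin

definition simple_graph :: "'a set \<Rightarrow> 'a set set \<Rightarrow> bool" where
  "simple_graph V E \<longleftrightarrow> finite V \<and> (\<forall>e\<in>E. e \<subseteq> V \<and> card e = 2)"

definition deg :: "'a set \<Rightarrow> 'a set set \<Rightarrow> 'a \<Rightarrow> nat" where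
  "deg V E v = card {u \<in> V. {u, v} \<in> E}"

definition is_path :: "'a set \<Rightarrow> 'a set set \<Rightarrow> 'a list \<Rightarrow> bool" where
  "is_path V E p \<longleftrightarrow> p \<noteq> [] \<and> distinct p \<and> set p \<subseteq> V \<and>
     (\<forall>i. Suc i < length p \<longrightarrow> {p ! i, p ! Suc i} \<in> E)"

definition is_cycle :: "'a set \<Rightarrow> 'a set set \<Rightarrow> 'a list \<Rightarrow> bool" where
  "is_cycle V E c \<longleftrightarrow> is_path V E c \<and> length c \<ge> 3 \<and> {last c, hd c} \<in> E"

definition connected_graph :: "'a set \<Rightarrow> 'a set set \<Rightarrow> bool" where
  "connected_graph V E \<longleftrightarrow>
     (\<forall>u\<in>V. \<forall>v\<in>V. \<exists>p. is_path V E p \<and> hd p = u \<and> last p = v)"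

definition tree :: "'a set \<Rightarrow> 'a set set \<Rightarrow> bool" where
  "tree V E \<longleftrightarrow> simple_graph V E \<and> V \<noteq> {} \<and> connected_graph V E \<and> \<not> (\<exists>c. is_cycle V E c)"

text \<open>Degree monotone path; its length is its number of vertices.\<close>
definition deg_monotone_path :: "'a set \<Rightarrow> 'a set set \<Rightarrow> 'a list \<Rightarrow> bool" where
  "deg_monotone_path V E p \<longleftrightarrow> is_path V E p \<and>
     (sorted (map (deg V E) p) \<or> sorted (rev (map (deg V E) p)))"

definition mp :: "'a set \<Rightarrow> 'a set set \<Rightarrow> nat" where
  "mp V E = Max {length p | p. deg_monotone_path V E p}"

definition saturated :: "'a set \<Rightarrow> 'a set set \<Rightarrow> bool" where
  "saturated V E \<longleftrightarrow>
     (\<forall>u\<in>V. \<forall>v\<in>V. u \<noteq> v \<and> {u, v} \<notin> E \<longrightarrow> mp V (insert {u, v} E) > mp V E)"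

text \<open>G is the star K_{1,|V|-1}: some centre is adjacent to all other vertices and
there are no other edges.\<close>
definition is_star :: "'a set \<Rightarrow> 'a set set \<Rightarrow> bool" where
  "is_star V E \<longleftrightarrow> (\<exists>c\<in>V. E = {{c, v} | v. v \<in> V - {c}})"

end

theory Submission
  imports Defs
begin


lemma edge_props:
  assumes "simple_graph V E" "{a,b} \<in> E"
  shows "a \<in> V" "b \<in> V" "a \<noteq> b"
  using assms unfolding simple_graph_def by (auto simp: card_insert_if split: if_splits)

lemma path_edge: "is_path V E p \<Longrightarrow> Suc i < length p \<Longrightarrow> {p!i, p!Suc i} \<in> E"
  unfolding is_path_def by blast

lemma path_V: "is_path V E p \<Longrightarrow> i < length p \<Longrightarrow> p!i \<in> V"
  unfolding is_path_def by (meson nth_mem subsetD)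

lemma path_distinct: "is_path V E p \<Longrightarrow> i < length p \<Longrightarrow> j < length p \<Longrightarrow> p!i = p!j \<Longrightarrow> i = j"
  unfolding is_path_def by (simp add: nth_eq_iff_index_eq)

lemma path_rev: assumes "is_path V E p" shows "is_path V E (rev p)"
  unfolding is_path_def
proof (intro conjI allI impI)
  show "rev p \<noteq> []" "distinct (rev p)" "set (rev p) \<subseteq> V" using assms unfolding is_path_def by auto
  fix i assume i: "Suc i < length (rev p)"
  define j where "j = length p - Suc (Suc i)"
  have "Suc j < length p" using i j_def by auto
  hence "{p!j, p!Suc j} \<in> E" using assms path_edge by blast
  moreover have "rev p ! i = p ! Suc j" "rev p ! Suc i = p ! j"
    using i j_def by (auto simp: rev_nth Suc_diff_Suc)
  ultimately show "{rev p ! i, rev p ! Suc i} \<in> E" by (simp add: insert_commute)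
qed

lemma nb_finite: "finite V \<Longrightarrow> finite {u \<in> V. {u, v} \<in> E}" by simp

lemma deg_le1_nb:
  assumes "finite V" "deg V E v \<le> 1" "a \<in> V" "{a,v} \<in> E" "z \<in> V" "{z,v} \<in> E"
  shows "z = a"
proof (rule ccontr)
  assume "z \<noteq> a"
  hence "{a,z} \<subseteq> {u \<in> V. {u, v} \<in> E}" using assms by auto
  hence "card {a,z} \<le> deg V E v" unfolding deg_def using assms(1) by (intro card_mono) auto
  with \<open>z \<noteq> a\<close> assms(2) show False by simp
qed

lemma deg_le2_nb:
  assumes "finite V" "deg V E v \<le> 2" "a \<in> V" "{a,v} \<in> E" "b \<in> V" "{b,v} \<in> E" "a \<noteq> b"
     "z \<in> V" "{z,v} \<in> E"
  shows "z = a \<or> z = b"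
proof (rule ccontr)
  assume "\<not> (z = a \<or> z = b)"
  hence "{a,b,z} \<subseteq> {u \<in> V. {u, v} \<in> E}" using assms by auto
  hence "card {a,b,z} \<le> deg V E v" unfolding deg_def using assms(1) by (intro card_mono) auto
  moreover have "card {a,b,z} = 3" using \<open>\<not> (z = a \<or> z = b)\<close> assms(7) by (auto simp: card_insert_if)
  ultimately show False using assms(2) by simp
qed

lemma deg_ge2:
  assumes "finite V" "a \<in> V" "{a,v} \<in> E" "b \<in> V" "{b,v} \<in> E" "a \<noteq> b"
  shows "deg V E v \<ge> 2"
proof -
  have "{a,b} \<subseteq> {u \<in> V. {u, v} \<in> E}" using assms by auto
  hence "card {a,b} \<le> deg V E v" unfolding deg_def using assms(1) by (intro card_mono) auto
  with assms show ?thesis by simp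
qed

lemma deg_ge1:
  assumes "finite V" "a \<in> V" "{a,v} \<in> E"
  shows "deg V E v \<ge> 1"
proof -
  have "{a} \<subseteq> {u \<in> V. {u, v} \<in> E}" using assms by auto
  hence "card {a} \<le> deg V E v" unfolding deg_def using assms(1) by (intro card_mono) auto
  thus ?thesis by simp
qed

lemma deg_other:
  assumes "finite V" "deg V E v \<ge> 2" "a \<in> V"
  shows "\<exists>q\<in>V. {q,v} \<in> E \<and> q \<noteq> a"
proof (rule ccontr)
  assume "\<not> ?thesis"
  hence "{u \<in> V. {u, v} \<in> E} \<subseteq> {a}" by auto
  hence "deg V E v \<le> card {a}" unfolding deg_def by (intro card_mono) auto
  with assms show False by simp
qed

lemma deg_insert:
  assumes "finite V" "u \<noteq> x" "{u,x} \<notin> E" "u \<in> V" "x \<in> V"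
  shows "deg V (insert {u,x} E) v = deg V E v + (if v = u \<or> v = x then 1 else 0)"
proof -
  consider "v = u" | "v = x" | "v \<noteq> u \<and> v \<noteq> x" by blast
  thus ?thesis
  proof cases
    case 1
    have "{z \<in> V. {z, v} \<in> insert {u,x} E} = insert x {z \<in> V. {z, v} \<in> E}"
      using 1 assms by (auto simp: doubleton_eq_iff insert_commute)
    moreover have "x \<notin> {z \<in> V. {z, v} \<in> E}" using 1 assms by (auto simp: insert_commute)
    ultimately show ?thesis using 1 assms unfolding deg_def by simp
  next
    case 2
    have "{z \<in> V. {z, v} \<in> insert {u,x} E} = insert u {z \<in> V. {z, v} \<in> E}"
      using 2 assms by (auto simp: doubleton_eq_iff insert_commute)
    moreover have "u \<notin> {z \<in> V. {z, v} \<in> E}" using 2 assms by (auto simp: insert_commute)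
    ultimately show ?thesis using 2 assms unfolding deg_def by simp
  next
    case 3
    have "{z \<in> V. {z, v} \<in> insert {u,x} E} = {z \<in> V. {z, v} \<in> E}"
      using 3 by (auto simp: doubleton_eq_iff)
    thus ?thesis using 3 unfolding deg_def by simp
  qed
qed




lemma last_nth: "0 < length xs \<Longrightarrow> last xs = xs!(length xs - 1)"
  by (cases xs rule: rev_cases) auto

lemma hd_nth: "0 < length xs \<Longrightarrow> hd xs = xs!0"
  by (cases xs) auto

lemma closure_lemma:
  assumes sg: "simple_graph V E" and conn: "connected_graph V E" and P: "is_path V E L"
    and len: "length L \<ge> 2" and h: "deg V E (hd L) \<le> 1" and l: "deg V E (last L) \<le> 1"
    and mid: "\<forall>i. 0 < i \<and> i < length L - 1 \<longrightarrow> deg V E (L!i) \<le> 2"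
  shows "V \<subseteq> set L"
proof -
  have fin: "finite V" using sg unfolding simple_graph_def by blast
  have cl: "z \<in> set L" if y: "y \<in> set L" and z: "z \<in> V" "{z,y} \<in> E" for y z
  proof -
    obtain i where i: "i < length L" "y = L!i" using y by (auto simp: in_set_conv_nth)
    consider "i = 0" | "i = length L - 1" | "0 < i \<and> i < length L - 1" using i by linarith
    thus ?thesis
    proof cases
      case 1
      have "{L!0, L!Suc 0} \<in> E" using P len path_edge by fastforce
      hence e: "{L!1, L!0} \<in> E" by (simp add: insert_commute)
      have "L!1 \<in> V" using P len path_V by fastforce
      moreover have "hd L = L!0" using len by (cases L) auto
      ultimately have "z = L!1" using deg_le1_nb[OF fin, of E "L!0" "L!1" z] h z i 1 e by simp
      thus ?thesis using len by simp
    next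
      case 2
      define j where "j = length L - 2"
      have jj: "Suc j = length L - 1" "Suc j < length L" using j_def len by auto
      have "{L!j, L!Suc j} \<in> E" using P jj path_edge by fastforce
      have "L!j \<in> V" using P jj path_V by fastforce
      moreover have "L \<noteq> []" using len by auto
      hence "last L = L!(length L - 1)" by (simp add: last_conv_nth)
      hence "last L = L!Suc j" using jj by simp
      ultimately have "z = L!j" using deg_le1_nb[OF fin, of E "L!Suc j" "L!j" z] l z i 2 jj
          \<open>{L!j, L!Suc j} \<in> E\<close> by simp
      thus ?thesis using jj by simp
    next
      case 3
      define j where "j = i - 1"
      have jj: "Suc j = i" "Suc i < length L" using j_def 3 by auto
      have e1: "{L!j, L!i} \<in> E" using P jj path_edge by fastforce
      have e2: "{L!i, L!Suc i} \<in> E" using P jj path_edge by fastforce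
      hence e2': "{L!Suc i, L!i} \<in> E" by (simp add: insert_commute)
      have V: "L!j \<in> V" "L!Suc i \<in> V" using P jj path_V by fastforce+
      have ne: "L!j \<noteq> L!Suc i" using path_distinct[OF P, of j "Suc i"] jj by auto
      have "z = L!j \<or> z = L!Suc i"
        using deg_le2_nb[OF fin, of E "L!i" "L!j" "L!Suc i" z] mid 3 e1 e2' V ne z i by auto
      thus ?thesis using jj by auto
    qed
  qed
  show ?thesis
  proof
    fix v assume v: "v \<in> V"
    have hdV: "hd L \<in> V" using P unfolding is_path_def by (simp add: subset_iff)
    obtain r where r: "is_path V E r" "hd r = hd L" "last r = v"
      using conn v hdV unfolding connected_graph_def by blast
    have "\<forall>k. k < length r \<longrightarrow> r!k \<in> set L"
    proof (intro allI)
      fix k show "k < length r \<longrightarrow> r!k \<in> set L"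
      proof (induction k)
        case 0
        have "r \<noteq> []" "L \<noteq> []" using r(1) P unfolding is_path_def by auto
        then show ?case using r(2) by (simp add: hd_conv_nth[symmetric])
      next
        case (Suc k)
        show ?case
        proof
          assume k: "Suc k < length r"
          hence "r!k \<in> set L" using Suc by simp
          moreover have "{r!k, r!Suc k} \<in> E" using r(1) k path_edge by blast
          moreover have "r!Suc k \<in> V" using r(1) k path_V by blast
          ultimately show "r!Suc k \<in> set L" using cl by (simp add: insert_commute)
        qed
      qed
    qed
    moreover have "r \<noteq> []" using r(1) unfolding is_path_def by auto
    moreover have "length r - 1 < length r" using \<open>r \<noteq> []\<close> by simp
    ultimately have "r!(length r - 1) \<in> set L" by blast
    thus "v \<in> set L" using r(3) \<open>r \<noteq> []\<close> by (simp add: last_conv_nth)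
  qed
qed

lemma cycle_take:
  assumes P: "is_path V E L" and j: "2 \<le> j" "j < length L" and e: "{L!j, L!0} \<in> E"
  shows "is_cycle V E (take (Suc j) L)"
proof -
  have "is_path V E (take (Suc j) L)"
    unfolding is_path_def
  proof (intro conjI allI impI)
    show "take (Suc j) L \<noteq> []" using j by auto
    show "distinct (take (Suc j) L)" using P unfolding is_path_def by simp
    show "set (take (Suc j) L) \<subseteq> V" using P unfolding is_path_def by (meson set_take_subset subset_trans)
    fix i assume "Suc i < length (take (Suc j) L)"
    thus "{take (Suc j) L ! i, take (Suc j) L ! Suc i} \<in> E" using P path_edge by auto
  qed
  moreover have "last (take (Suc j) L) = L!j" proof -
    have "take (Suc j) L \<noteq> []" using j by auto
    hence "last (take (Suc j) L) = take (Suc j) L ! (length (take (Suc j) L) - 1)" by (simp add: last_conv_nth)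
    also have "length (take (Suc j) L) - 1 = j" using j by simp
    finally show ?thesis using j by simp
  qed
  moreover have "hd (take (Suc j) L) = L!0" using j hd_nth[of "take (Suc j) L"] by auto
  ultimately show ?thesis unfolding is_cycle_def using j e by auto
qed

lemma cycle_drop:
  assumes P: "is_path V E L" and j: "j + 2 < length L" and e: "{last L, L!j} \<in> E"
  shows "is_cycle V E (drop j L)"
proof -
  have "is_path V E (drop j L)"
    unfolding is_path_def
  proof (intro conjI allI impI)
    show "drop j L \<noteq> []" using j by auto
    show "distinct (drop j L)" using P unfolding is_path_def by simp
    show "set (drop j L) \<subseteq> V" using P unfolding is_path_def by (meson set_drop_subset subset_trans)
    fix i assume "Suc i < length (drop j L)"
    thus "{drop j L ! i, drop j L ! Suc i} \<in> E" using P path_edge[of V E L "j+i"] by auto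
  qed
  moreover have "last (drop j L) = last L" using j by simp
  moreover have "hd (drop j L) = L!j" using j by (simp add: hd_drop_conv_nth)
  ultimately show ?thesis unfolding is_cycle_def using j e by auto
qed




lemma dmp_up: "is_path V E q \<Longrightarrow> (\<And>i. Suc i < length q \<Longrightarrow> deg V E (q!i) \<le> deg V E (q!Suc i))
   \<Longrightarrow> deg_monotone_path V E q"
  unfolding deg_monotone_path_def sorted_iff_nth_Suc by auto

lemma dmp_down: "is_path V E q \<Longrightarrow> (\<And>i. Suc i < length q \<Longrightarrow> deg V E (q!Suc i) \<le> deg V E (q!i))
   \<Longrightarrow> deg_monotone_path V E q"
  unfolding deg_monotone_path_def sorted_rev_iff_nth_Suc by auto

lemma mono_main:
  assumes sg: "simple_graph V E" and conn: "connected_graph V E" and acyc: "\<not> (\<exists>c. is_cycle V E c)"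
    and xV: "x \<in> V" and xmax: "\<forall>v\<in>V. deg V E v \<le> deg V E x" and x2: "deg V E x \<ge> 2"
    and uV: "u \<in> V" and u1: "deg V E u = 1" and w: "{u,w} \<in> E" and ux: "{u,x} \<notin> E"
    and uneqx: "u \<noteq> x"
    and P: "is_path V (insert {u,x} E) p" and S: "sorted (map (deg V (insert {u,x} E)) p)"
  shows "\<exists>q. deg_monotone_path V E q \<and> length p \<le> length q"
proof -
  define E' where "E' = insert {u,x} E"
  define d where "d = deg V E"
  define d' where "d' = deg V E'"
  define n where "n = length p"
  have fin: "finite V" using sg unfolding simple_graph_def by blast
  have dd: "\<And>v. d' v = d v + (if v = u \<or> v = x then 1 else 0)"
    unfolding d_def d'_def E'_def using deg_insert[OF fin uneqx ux uV xV] by blast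
  have wV: "w \<in> V" and wu: "w \<noteq> u" using edge_props[OF sg w] by auto
  have wu': "{w,u} \<in> E" using w by (simp add: insert_commute)
  have nbu: "\<And>z. z \<in> V \<Longrightarrow> {z,u} \<in> E \<Longrightarrow> z = w"
    using deg_le1_nb[OF fin, of E u w] u1 wV wu' by auto
  have n0: "0 < n" using P unfolding n_def is_path_def by auto
  have pV: "\<And>i. i < n \<Longrightarrow> p!i \<in> V" using path_V[OF P] n_def by auto
  have pE': "\<And>i. Suc i < n \<Longrightarrow> {p!i, p!Suc i} \<in> E'" using path_edge[OF P] n_def E'_def by auto
  have pdist: "\<And>i j. i < n \<Longrightarrow> j < n \<Longrightarrow> p!i = p!j \<Longrightarrow> i = j" using path_distinct[OF P] n_def by auto
  have Sm: "\<And>i j. i \<le> j \<Longrightarrow> j < n \<Longrightarrow> d' (p!i) \<le> d' (p!j)"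
    using sorted_nth_mono[OF S] n_def d'_def E'_def by fastforce
  have dlex: "\<And>v. v \<in> V \<Longrightarrow> d v \<le> d x" using xmax d_def by auto
  have d'u: "d' u = 2" using dd u1 d_def uneqx by auto
  have d'x: "d' x = d x + 1" using dd by auto
  have x2': "2 \<le> d x" using x2 d_def by simp
  have small: "d' v \<le> d x" if "v \<in> V" "v \<noteq> x" for v
  proof (cases "v = u")
    case True thus ?thesis using d'u x2' by simp
  next
    case False thus ?thesis using dd dlex that by simp
  qed
  have Fx: "i = n - 1" if i: "i < n" "p!i = x" for i
  proof (rule ccontr)
    assume "i \<noteq> n - 1"
    hence si: "Suc i < n" using i by auto
    have "d' (p!i) \<le> d' (p!Suc i)" using Sm si by auto
    moreover have "p!Suc i \<noteq> x" using pdist[of i "Suc i"] si i by auto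
    hence "d' (p!Suc i) \<le> d x" using small pV si by auto
    ultimately show False using i d'x by simp
  qed
  show ?thesis
  proof (cases "\<exists>i. Suc i < n \<and> {p!i, p!Suc i} = {u,x}")
    case False
    have PE: "is_path V E p" using P False pE' E'_def n_def unfolding is_path_def by auto
    have KEY: "d (p!i) \<le> d (p!Suc i)" if i: "Suc i < n" "p!Suc i \<noteq> u" for i
    proof (cases "p!Suc i = x")
      case True thus ?thesis using dlex pV i by auto
    next
      case False
      have "d (p!i) \<le> d' (p!i)" using dd by simp
      also have "\<dots> \<le> d' (p!Suc i)" using Sm i by auto
      also have "\<dots> = d (p!Suc i)" using dd i False by simp
      finally show ?thesis .
    qed
    show ?thesis
    proof (cases "\<exists>k. k < n \<and> 0 < k \<and> p!k = u")
      case False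
      hence "\<And>i. Suc i < n \<Longrightarrow> p!Suc i \<noteq> u" by blast
      hence "deg_monotone_path V E p" using dmp_up[OF PE] KEY d_def n_def by auto
      thus ?thesis by blast
    next
      case True
      then obtain k where k: "k < n" "0 < k" "p!k = u" by blast
      define j where "j = k - 1"
      have jk: "Suc j = k" using j_def k by simp
      have "{p!j, p!Suc j} \<in> E" using path_edge[OF PE, of j] jk k n_def by auto
      hence pj: "p!j = w" using nbu pV k jk by auto
      have kn: "k = n - 1"
      proof (rule ccontr)
        assume "k \<noteq> n - 1" hence sk: "Suc k < n" using k by auto
        have "{p!k, p!Suc k} \<in> E" using path_edge[OF PE, of k] sk n_def by auto
        hence "p!Suc k = w" using nbu pV sk k by (auto simp: insert_commute)
        hence "j = Suc k" using pdist[of j "Suc k"] pj sk jk by auto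
        thus False using jk by simp
      qed
      have xnot: "x \<notin> set p"
      proof
        assume "x \<in> set p" then obtain i where "i < n" "p!i = x" by (auto simp: in_set_conv_nth n_def)
        hence "i = n - 1" using Fx by auto
        thus False using k kn uneqx \<open>p!i = x\<close> by auto
      qed
      have le2: "d' (p!i) \<le> 2" if "i < n" for i
        using Sm[of i k] k kn d'u that by auto
      have nu: "p!i \<noteq> u \<and> p!i \<noteq> x" if "i < n - 1" for i
        using pdist[of i k] k kn xnot that nth_mem[of i p] n_def by auto
      have dd2: "d (p!i) = d' (p!i)" if "i < n - 1" for i using nu[OF that] dd by simp
      show ?thesis
      proof (cases "d (p!0) \<le> 1")
        case True
        have "V \<subseteq> set p"
        proof (rule closure_lemma[OF sg conn PE])
          show "2 \<le> length p" using k n_def by auto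
          show "deg V E (hd p) \<le> 1" using True hd_nth[of p] n0 d_def n_def by auto
          have "last p = u" using last_nth[of p] n0 k kn n_def by auto
          thus "deg V E (last p) \<le> 1" using u1 by simp
          show "\<forall>i. 0 < i \<and> i < length p - 1 \<longrightarrow> deg V E (p!i) \<le> 2"
            using le2 dd2 d_def n_def by fastforce
        qed
        thus ?thesis using xV xnot by auto
      next
        case False
        have all2: "d (p!i) = 2" if "i < n - 1" for i
        proof -
          have "d (p!0) = d' (p!0)" using dd2 k kn by auto
          also have "\<dots> \<le> d' (p!i)" using Sm[of 0 i] that by auto
          moreover have "i < n" using that by arith
          ultimately show ?thesis using False le2[of i] dd2[OF that] by fastforce
        qed
        have "deg_monotone_path V E p"
        proof (rule dmp_down[OF PE])
          fix i assume i: "Suc i < length p"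
          show "deg V E (p!Suc i) \<le> deg V E (p!i)"
          proof (cases "Suc i < n - 1")
            case True thus ?thesis using all2[of i] all2[of "Suc i"] d_def by simp
          next
            case False
            hence "Suc i = k" using i kn n_def by auto
            thus ?thesis using all2[of i] k kn u1 d_def by simp
          qed
        qed
        thus ?thesis by blast
      qed
    qed
  next
    case True
    then obtain i where i: "Suc i < n" "{p!i, p!Suc i} = {u,x}" by blast
    have pi: "p!i = u \<and> p!Suc i = x"
    proof -
      have "(p!i = u \<and> p!Suc i = x) \<or> (p!i = x \<and> p!Suc i = u)" using i(2) by (auto simp: doubleton_eq_iff)
      moreover have "\<not> (p!i = x)" using Fx[of i] i by auto
      ultimately show ?thesis by blast
    qed
    have sn: "Suc i = n - 1" using Fx[of "Suc i"] i pi by auto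
    show ?thesis
    proof (cases "i = 0")
      case True
      have PW: "is_path V E [w,u]" unfolding is_path_def using wV uV wu wu' by (auto simp: less_Suc_eq)
      have "deg_monotone_path V E [w,u]"
        unfolding deg_monotone_path_def using PW by auto
      moreover have "length [w,u] = n" using True sn i by auto
      ultimately show ?thesis using n_def by (metis order.refl)
    next
      case False
      define L where "L = take (n - 1) p"
      have Ln: "length L = n - 1" using L_def n_def by simp
      have Lnth: "\<And>j. j < n - 1 \<Longrightarrow> L!j = p!j" using L_def by simp
      have xL: "x \<notin> set L"
      proof
        assume "x \<in> set L" then obtain j where j: "j < n - 1" "L!j = x" using Ln by (auto simp: in_set_conv_nth)
        have "j < n" using j by arith
        hence "j = n - 1" using Fx[of j] Lnth j by auto
        thus False using j by simp
      qed
      have PL: "is_path V E L" unfolding is_path_def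
      proof (intro conjI allI impI)
        show "L \<noteq> []" using Ln sn False by auto
        show "distinct L" using P unfolding L_def is_path_def by simp
        show "set L \<subseteq> V" using P unfolding L_def is_path_def by (meson set_take_subset subset_trans)
        fix j assume j: "Suc j < length L"
        have "{p!j, p!Suc j} \<in> E'" using pE' j Ln by auto
        moreover have "L!j \<in> set L" "L!Suc j \<in> set L" using j by auto
        hence "x \<noteq> p!j" "x \<noteq> p!Suc j" using xL Lnth j Ln by auto
        hence "{p!j, p!Suc j} \<noteq> {u,x}" by (auto simp: doubleton_eq_iff)
        ultimately show "{L!j, L!Suc j} \<in> E" using E'_def Lnth j Ln by auto
      qed
      have le2: "d' (p!j) \<le> 2" if "j < n - 1" for j
        using Sm[of j i] sn pi d'u that by auto
      have nu: "p!j \<noteq> u \<and> p!j \<noteq> x" if "j < n - 2" for j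
      proof -
        have jn: "j < n" "j \<noteq> i" "j \<noteq> Suc i" "i < n" using that sn by arith+
        show ?thesis
        proof
          show "p!j \<noteq> u" using pdist[OF jn(1) jn(4)] pi jn(2) by metis
          show "p!j \<noteq> x" using pdist[OF jn(1) i(1)] pi jn(3) by metis
        qed
      qed
      have dd2: "d (p!j) = d' (p!j)" if "j < n - 2" for j using nu[OF that] dd by simp
      have lastL: "last L = u"
      proof -
        have "i < n - 1" using sn by arith
        hence Li: "L!i = p!i" using Lnth by blast
        have "length L - 1 = i" using Ln sn by arith
        moreover have "last L = L!(length L - 1)" using last_nth[of L] Ln sn by auto
        ultimately show ?thesis using pi Li by simp
      qed
      have hdL: "hd L = p!0" using hd_nth[of L] Ln sn Lnth by auto
      show ?thesis
      proof (cases "d (p!0) \<le> 1")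
        case True
        have "V \<subseteq> set L"
        proof (rule closure_lemma[OF sg conn PL])
          show "2 \<le> length L" using Ln sn False by auto
          show "deg V E (hd L) \<le> 1" using True hdL d_def by auto
          show "deg V E (last L) \<le> 1" using lastL u1 by simp
          show "\<forall>j. 0 < j \<and> j < length L - 1 \<longrightarrow> deg V E (L!j) \<le> 2"
            using le2 dd2 d_def Ln Lnth by fastforce
        qed
        thus ?thesis using xV xL by auto
      next
        case False2: False
        have all2: "d (p!j) = 2" if "j < n - 2" for j
        proof -
          have "d (p!0) = d' (p!0)" using dd2 that by auto
          also have "\<dots> \<le> d' (p!j)" using Sm[of 0 j] that by auto
          moreover have "j < n - 1" using that by arith
          ultimately show ?thesis using False2 le2[of j] dd2[OF that] by fastforce
        qed
        have p0V: "p!0 \<in> V" "p!1 \<in> V" using pV sn False by auto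
        have "deg V E (p!0) \<ge> 2" using all2[of 0] sn False d_def by auto
        then obtain q where q: "q \<in> V" "{q, p!0} \<in> E" "q \<noteq> p!1"
          using deg_other[OF fin, of E "p!0" "p!1"] p0V by auto
        have qL: "q \<notin> set L"
        proof
          assume "q \<in> set L" then obtain j where j: "j < n - 1" "L!j = q" using Ln by (auto simp: in_set_conv_nth)
          have "q \<noteq> p!0" using edge_props[OF sg q(2)] by auto
          have n1: "0 < n - 1" "1 < n - 1" using sn False by arith+
          have L01: "L!0 = p!0" "L!1 = p!1" using Lnth n1 by blast+
          have "j \<noteq> 0"
          proof
            assume "j = 0" thus False using j(2) L01 \<open>q \<noteq> p!0\<close> by simp
          qed
          moreover have "j \<noteq> 1"
          proof
            assume "j = 1" thus False using j(2) L01 q(3) by simp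
          qed
          ultimately have "2 \<le> j" by simp
          moreover have "{L!j, L!0} \<in> E" using j q L01 by auto
          ultimately have "is_cycle V E (take (Suc j) L)" using cycle_take[OF PL, of j] j Ln by auto
          thus False using acyc by blast
        qed
        define M where "M = q # L"
        have lenM: "length M = n" using M_def Ln n0 by auto
        have PM: "is_path V E M" unfolding is_path_def
        proof (intro conjI allI impI)
          show "M \<noteq> []" using M_def by simp
          show "distinct M" using PL qL unfolding M_def is_path_def by simp
          show "set M \<subseteq> V" using PL q unfolding M_def is_path_def by simp
          fix j assume j: "Suc j < length M"
          show "{M!j, M!Suc j} \<in> E"
          proof (cases j)
            case 0 thus ?thesis using q M_def Lnth sn by auto
          next
            case (Suc j') thus ?thesis using path_edge[OF PL, of j'] j M_def by auto
          qed
        qed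
        have Mnth: "M!Suc j = p!j" if "j < n - 1" for j using M_def Lnth that by simp
        show ?thesis
        proof (cases "d q \<le> 1")
          case True
          have "V \<subseteq> set M"
          proof (rule closure_lemma[OF sg conn PM])
            show "2 \<le> length M" using lenM sn by auto
            show "deg V E (hd M) \<le> 1" using True M_def d_def by auto
            show "deg V E (last M) \<le> 1" using lastL u1 M_def PL unfolding is_path_def by simp
            show "\<forall>j. 0 < j \<and> j < length M - 1 \<longrightarrow> deg V E (M!j) \<le> 2"
            proof (intro allI impI)
              fix j assume j: "0 < j \<and> j < length M - 1"
              then obtain j' where "j = Suc j'" by (cases j) auto
              thus "deg V E (M!j) \<le> 2" using j all2[of j'] Mnth[of j'] lenM d_def by auto
            qed
          qed
          moreover have "x \<noteq> q" using True x2' by auto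
          ultimately show ?thesis using xV xL M_def by auto
        next
          case False3: False
          have "deg_monotone_path V E M"
          proof (rule dmp_down[OF PM])
            fix j assume j: "Suc j < length M"
            show "deg V E (M!Suc j) \<le> deg V E (M!j)"
            proof (cases j)
              case 0 thus ?thesis using False3 all2[of 0] Mnth[of 0] sn False M_def d_def by auto
            next
              case (Suc j')
              have a: "d (M!j) = 2" using Suc all2[of j'] Mnth[of j'] j lenM by auto
              have "d (M!Suc j) \<le> 2"
              proof (cases "Suc j' < n - 2")
                case True thus ?thesis using Suc all2[of "Suc j'"] Mnth[of "Suc j'"] by auto
              next
                case False
                hence "Suc j' = i" using j lenM Suc sn by auto
                thus ?thesis using Suc Mnth[of "Suc j'"] pi u1 d_def sn by auto
              qed
              thus ?thesis using a d_def by simp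
            qed
          qed
          thus ?thesis using lenM n_def by (metis order.refl)
        qed
      qed
    qed
  qed
qed




lemma len_le_card: "finite V \<Longrightarrow> is_path V E p \<Longrightarrow> length p \<le> card V"
proof -
  assume f: "finite V" and P: "is_path V E p"
  have d: "distinct p" and s: "set p \<subseteq> V" using P unfolding is_path_def by simp_all
  have "length p = card (set p)" using distinct_card[OF d] by simp
  also have "\<dots> \<le> card V" by (rule card_mono[OF f s])
  finally show ?thesis .
qed

lemma fin_lens: "finite V \<Longrightarrow> finite {length p |p. deg_monotone_path V E p}"
proof -
  assume f: "finite V"
  have "{length p |p. deg_monotone_path V E p} \<subseteq> {..card V}"
  proof
    fix k assume "k \<in> {length p |p. deg_monotone_path V E p}"
    then obtain p where "k = length p" "is_path V E p" unfolding deg_monotone_path_def by blast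
    thus "k \<in> {..card V}" using len_le_card[OF f] by simp
  qed
  moreover have "finite {..card V}" by simp
  ultimately show ?thesis by (rule finite_subset)
qed

lemma single_dmp: "v \<in> V \<Longrightarrow> deg_monotone_path V E [v]"
  unfolding deg_monotone_path_def is_path_def by simp

lemma mp_ge: "finite V \<Longrightarrow> deg_monotone_path V E p \<Longrightarrow> length p \<le> mp V E"
proof -
  assume f: "finite V" and d: "deg_monotone_path V E p"
  have m: "length p \<in> {length p |p. deg_monotone_path V E p}" using d by blast
  have "length p \<le> Max {length p |p. deg_monotone_path V E p}" by (rule Max_ge[OF fin_lens[OF f] m])
  thus ?thesis unfolding mp_def .
qed

lemma mp_attained: "finite V \<Longrightarrow> V \<noteq> {} \<Longrightarrow> \<exists>p. deg_monotone_path V E p \<and> length p = mp V E"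
proof -
  assume f: "finite V" and ne: "V \<noteq> {}"
  then obtain v where "v \<in> V" by blast
  hence "deg_monotone_path V E [v]" by (rule single_dmp)
  hence ne2: "{length p |p. deg_monotone_path V E p} \<noteq> {}" by blast
  have "Max {length p |p. deg_monotone_path V E p} \<in> {length p |p. deg_monotone_path V E p}"
    by (rule Max_in[OF fin_lens[OF f] ne2])
  hence "mp V E \<in> {length p |p. deg_monotone_path V E p}" unfolding mp_def .
  hence "\<exists>p. mp V E = length p \<and> deg_monotone_path V E p" by (simp only: mem_Collect_eq)
  then obtain q where "mp V E = length q" "deg_monotone_path V E q" by blast
  thus ?thesis by metis
qed

lemma mp_insert_le:
  assumes tr: "tree V E"
    and xV: "x \<in> V" and xmax: "\<forall>v\<in>V. deg V E v \<le> deg V E x" and x2: "deg V E x \<ge> 2"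
    and uV: "u \<in> V" and u1: "deg V E u = 1" and w: "{u,w} \<in> E" and ux: "{u,x} \<notin> E"
    and uneqx: "u \<noteq> x"
  shows "mp V (insert {u,x} E) \<le> mp V E"
proof -
  have sg: "simple_graph V E" and conn: "connected_graph V E" and acyc: "\<not> (\<exists>c. is_cycle V E c)"
    and ne: "V \<noteq> {}" using tr unfolding tree_def by auto
  have fin: "finite V" using sg unfolding simple_graph_def by blast
  obtain p where p: "deg_monotone_path V (insert {u,x} E) p" "length p = mp V (insert {u,x} E)"
    using mp_attained[OF fin ne] by blast
  have Pp: "is_path V (insert {u,x} E) p" using p(1) unfolding deg_monotone_path_def by blast
  have "\<exists>q. deg_monotone_path V E q \<and> length p \<le> length q"
  proof (cases "sorted (map (deg V (insert {u,x} E)) p)")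
    case True
    show ?thesis by (rule mono_main[OF sg conn acyc xV xmax x2 uV u1 w ux uneqx Pp True])
  next
    case False
    hence S0: "sorted (rev (map (deg V (insert {u,x} E)) p))" using p(1) unfolding deg_monotone_path_def by blast
    have S: "sorted (map (deg V (insert {u,x} E)) (rev p))" using S0 by (simp add: rev_map)
    have R: "is_path V (insert {u,x} E) (rev p)" using path_rev[OF Pp] .
    obtain q where "deg_monotone_path V E q" "length (rev p) \<le> length q"
      using mono_main[OF sg conn acyc xV xmax x2 uV u1 w ux uneqx R S] by blast
    thus ?thesis by (metis length_rev)
  qed
  then obtain q where q: "deg_monotone_path V E q" "length p \<le> length q" by blast
  have "length q \<le> mp V E" using mp_ge[OF fin q(1)] .
  hence "length p \<le> mp V E" using q(2) by linarith
  thus ?thesis using p(2) by simp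
qed




lemma exists_leaf:
  assumes tr: "tree V E" and c3: "card V \<ge> 3" and ns: "\<not> is_star V E"
  shows "\<exists>x u w. x \<in> V \<and> (\<forall>v\<in>V. deg V E v \<le> deg V E x) \<and> deg V E x \<ge> 2 \<and> u \<in> V \<and>
     deg V E u = 1 \<and> {u,w} \<in> E \<and> {u,x} \<notin> E \<and> u \<noteq> x"
proof -
  have sg: "simple_graph V E" and conn: "connected_graph V E" and acyc: "\<not> (\<exists>c. is_cycle V E c)"
    and ne: "V \<noteq> {}" using tr unfolding tree_def by auto
  have fin: "finite V" using sg unfolding simple_graph_def by blast
  obtain x where xV: "x \<in> V" and xmax: "\<forall>v\<in>V. deg V E v \<le> deg V E x"
  proof -
    have "Max (deg V E ` V) \<in> deg V E ` V" using fin ne by simp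
    then obtain x where "x \<in> V" "deg V E x = Max (deg V E ` V)" by auto
    moreover have "\<forall>v\<in>V. deg V E v \<le> Max (deg V E ` V)" using fin by simp
    ultimately show ?thesis using that by metis
  qed
  define LS where "LS = {length p |p. is_path V E p \<and> hd p = x}"
  have finLS: "finite LS"
  proof -
    have "LS \<subseteq> {..card V}"
    proof
      fix k assume "k \<in> LS"
      then obtain p where "k = length p" "is_path V E p" unfolding LS_def by blast
      thus "k \<in> {..card V}" using len_le_card[OF fin] by simp
    qed
    moreover have "finite {..card V}" by simp
    ultimately show ?thesis by (rule finite_subset)
  qed
  have "is_path V E [x]" using xV unfolding is_path_def by simp
  hence "length [x] \<in> LS" unfolding LS_def by fastforce
  hence neLS: "LS \<noteq> {}" by blast
  define M where "M = Max LS"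
  have "M \<in> LS" unfolding M_def by (rule Max_in[OF finLS neLS])
  hence "\<exists>p. M = length p \<and> is_path V E p \<and> hd p = x" unfolding LS_def by (simp only: mem_Collect_eq)
  then obtain p where P: "is_path V E p" and hp: "hd p = x" and lp: "length p = M" by metis
  have longest: "length r \<le> M" if "is_path V E r" "hd r = x" for r
  proof -
    have "length r \<in> LS" unfolding LS_def using that by blast
    thus ?thesis unfolding M_def by (rule Max_ge[OF finLS])
  qed
  have adjx: "{x,v} \<in> E" if M2: "M \<le> 2" and vV: "v \<in> V" and vx: "v \<noteq> x" for v
  proof -
    obtain r where r: "is_path V E r" "hd r = x" "last r = v" using conn xV vV
      unfolding connected_graph_def by blast
    have "length r \<le> 2" using longest[OF r(1,2)] M2 by simp
    moreover have "length r \<noteq> 1"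
    proof
      assume "length r = 1" then obtain a where "r = [a]" by (cases r) auto
      thus False using r vx by simp
    qed
    moreover have "length r \<noteq> 0" using r(1) unfolding is_path_def by simp
    ultimately have "length r = 2" by linarith
    then obtain a b where rab: "r = [a,b]" by (cases r; cases "tl r") auto
    have "{r!0, r!Suc 0} \<in> E" using path_edge[OF r(1), of 0] rab by simp
    thus ?thesis using rab r by simp
  qed
  show ?thesis
  proof (cases "M \<le> 2")
    case True
    have "E = {{x, v} |v. v \<in> V - {x}}"
    proof
      show "{{x, v} |v. v \<in> V - {x}} \<subseteq> E"
      proof
        fix e assume "e \<in> {{x, v} |v. v \<in> V - {x}}"
        then obtain v where "e = {x,v}" "v \<in> V" "v \<noteq> x" by blast
        thus "e \<in> E" using adjx[OF True] by blast
      qed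
      show "E \<subseteq> {{x, v} |v. v \<in> V - {x}}"
      proof
        fix e assume e: "e \<in> E"
        then obtain a b where ab: "e = {a,b}" "a \<noteq> b" using sg unfolding simple_graph_def
          by (meson card_2_iff)
        have abV: "a \<in> V" "b \<in> V" using edge_props[OF sg] e ab by auto
        show "e \<in> {{x, v} |v. v \<in> V - {x}}"
        proof (cases "a = x \<or> b = x")
          case True
          show ?thesis
          proof (cases "a = x")
            case True
            hence "e = {x,b}" "b \<in> V - {x}" using ab abV by auto
            thus ?thesis by blast
          next
            case False
            hence "e = {x,a}" "a \<in> V - {x}" "b = x" using ab abV True by (auto simp: insert_commute)
            thus ?thesis by blast
          qed
        next
          case False
          have "{x,a} \<in> E" using adjx True abV False by auto
          hence "is_path V E [x,a,b]" using e ab abV xV False unfolding is_path_def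
            by (auto simp: less_Suc_eq nth_Cons')
          hence "3 \<le> M" using longest[of "[x,a,b]"] by simp
          thus ?thesis using \<open>M \<le> 2\<close> by simp
        qed
      qed
    qed
    hence "is_star V E" unfolding is_star_def using xV by blast
    thus ?thesis using ns by simp
  next
    case False
    define z where "z = last p"
    define w where "w = p!(M - 2)"
    have zz: "z = p!(M - 1)" using last_nth[of p] lp False z_def by simp
    have pV: "\<And>i. i < M \<Longrightarrow> p!i \<in> V" using path_V[OF P] lp by auto
    have wz: "{w, z} \<in> E" using path_edge[OF P, of "M - 2"] lp False zz w_def
      by (simp add: Suc_diff_Suc numeral_2_eq_2)
    have nbz: "y = w" if y: "y \<in> V" "{y,z} \<in> E" for y
    proof (cases "y \<in> set p")
      case False
      have "is_path V E (p @ [y])" unfolding is_path_def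
      proof (intro conjI allI impI)
        show "p @ [y] \<noteq> []" by simp
        show "distinct (p @ [y])" using P False unfolding is_path_def by simp
        show "set (p @ [y]) \<subseteq> V" using P y unfolding is_path_def by simp
        fix i assume i: "Suc i < length (p @ [y])"
        show "{(p @ [y]) ! i, (p @ [y]) ! Suc i} \<in> E"
        proof (cases "Suc i < length p")
          case True thus ?thesis using path_edge[OF P True] by (simp add: nth_append)
        next
          case False
          hence "i = length p - 1" "Suc i = length p" using i by auto
          thus ?thesis using y zz lp \<open>\<not> M \<le> 2\<close> by (simp add: nth_append insert_commute)
        qed
      qed
      moreover have "hd (p @ [y]) = x" using hp P unfolding is_path_def by simp
      ultimately have "length (p @ [y]) \<le> M" using longest by blast
      thus ?thesis using lp by simp
    next
      case True
      then obtain j where j: "j < M" "p!j = y" using lp by (auto simp: in_set_conv_nth)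
      have "y \<noteq> z" using edge_props[OF sg y(2)] by simp
      hence "j \<noteq> M - 1" using j zz by auto
      moreover have "\<not> j + 2 < M"
      proof
        assume "j + 2 < M"
        hence "is_cycle V E (drop j p)" using cycle_drop[OF P, of j] lp y j z_def
          by (simp add: insert_commute)
        thus False using acyc by blast
      qed
      ultimately have "j = M - 2" using j by arith
      thus ?thesis using j w_def by simp
    qed
    have wV: "w \<in> V" using edge_props[OF sg wz] by simp
    have zV: "z \<in> V" using edge_props[OF sg wz] by simp
    have dz: "deg V E z = 1"
    proof -
      have "{v \<in> V. {v, z} \<in> E} = {w}" using nbz wV wz by blast
      thus ?thesis unfolding deg_def by simp
    qed
    have zx: "{z, x} \<notin> E"
    proof
      assume "{z,x} \<in> E"
      hence "is_cycle V E (drop 0 p)" using cycle_drop[OF P, of 0] lp False z_def hp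
        hd_nth[of p] by simp
      thus False using acyc by blast
    qed
    have znx: "z \<noteq> x"
    proof
      assume "z = x"
      hence "M - 1 = 0" using path_distinct[OF P, of "M - 1" 0] zz hp hd_nth[of p] lp False by simp
      thus False using False by simp
    qed
    have "deg V E (p!1) \<ge> 2"
    proof (rule deg_ge2[OF fin, of "p!0" _ _ "p!2"])
      show "p!0 \<in> V" "p!2 \<in> V" using pV False by auto
      show "{p!0, p!1} \<in> E" using path_edge[OF P, of 0] lp False by simp
      show "{p!2, p!1} \<in> E" using path_edge[OF P, of 1] lp False by (simp add: numeral_2_eq_2 insert_commute)
      show "p!0 \<noteq> p!2" using path_distinct[OF P, of 0 2] lp False by auto
    qed
    hence x2: "deg V E x \<ge> 2" using xmax pV[of 1] False by fastforce
    have zw: "{z,w} \<in> E" using wz by (simp add: insert_commute)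
    have zx': "{z,x} \<notin> E" using zx by simp
    show ?thesis
      using xV xmax x2 zV dz zw zx' znx by blast
  qed
qed



lemma star_saturated:
  assumes sg: "simple_graph V E" and cV: "c \<in> V" and E: "E = {{c, v} |v. v \<in> V - {c}}"
    and c3: "card V \<ge> 3"
  shows "saturated V E"
  unfolding saturated_def
proof (intro ballI impI)
  fix a b assume aV: "a \<in> V" and bV: "b \<in> V" and ab: "a \<noteq> b \<and> {a, b} \<notin> E"
  have fin: "finite V" using sg unfolding simple_graph_def by blast
  have ne: "V \<noteq> {}" using cV by auto
  have memE: "e \<in> E \<longleftrightarrow> (\<exists>v. e = {c,v} \<and> v \<in> V - {c})" for e
    unfolding E by (simp only: mem_Collect_eq)
  have cE: "{c,v} \<in> E" if "v \<in> V" "v \<noteq> c" for v using memE that by blast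
  have ac: "a \<noteq> c"
  proof
    assume "a = c"
    hence "{a,b} \<in> E" using cE[of b] bV ab by blast
    thus False using ab by blast
  qed
  have bc: "b \<noteq> c"
  proof
    assume "b = c"
    hence "{a,b} \<in> E" using cE[of a] aV ab by (simp add: insert_commute)
    thus False using ab by blast
  qed
  have nbc: "{z \<in> V. {z, c} \<in> E} = V - {c}"
  proof
    show "{z \<in> V. {z, c} \<in> E} \<subseteq> V - {c}"
    proof
      fix z assume "z \<in> {z \<in> V. {z, c} \<in> E}"
      hence "z \<in> V" "{z,c} \<in> E" by auto
      then obtain v where "{z,c} = {c,v}" "v \<in> V - {c}" using memE by blast
      thus "z \<in> V - {c}" by (auto simp: doubleton_eq_iff)
    qed
    show "V - {c} \<subseteq> {z \<in> V. {z, c} \<in> E}" using cE by (auto simp: insert_commute)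
  qed
  have dc: "deg V E c = card V - 1" unfolding deg_def nbc using cV fin by simp
  have dc2: "deg V E c \<ge> 2" using dc c3 by simp
  have nbl: "{z \<in> V. {z, v} \<in> E} = {c}" if vV: "v \<in> V" and vc: "v \<noteq> c" for v
  proof
    show "{z \<in> V. {z, v} \<in> E} \<subseteq> {c}"
    proof
      fix z assume "z \<in> {z \<in> V. {z, v} \<in> E}"
      hence "{z,v} \<in> E" by auto
      then obtain v' where "{z,v} = {c,v'}" "v' \<in> V - {c}" using memE by blast
      thus "z \<in> {c}" using vc by (auto simp: doubleton_eq_iff)
    qed
    show "{c} \<subseteq> {z \<in> V. {z, v} \<in> E}" using cE[OF vV vc] cV by simp
  qed
  have dl: "deg V E v = 1" if "v \<in> V" "v \<noteq> c" for v unfolding deg_def nbl[OF that] by simp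
  have le2: "mp V E \<le> 2"
  proof -
    obtain p where p: "deg_monotone_path V E p" "length p = mp V E" using mp_attained[OF fin ne] by blast
    have P: "is_path V E p" using p unfolding deg_monotone_path_def by simp
    show ?thesis
    proof (rule ccontr)
      assume "\<not> mp V E \<le> 2"
      hence l3: "3 \<le> length p" using p by simp
      have e0: "{p!0, p!1} \<in> E" using path_edge[OF P, of 0] l3 by simp
      have e1: "{p!1, p!2} \<in> E" using path_edge[OF P, of 1] l3 by (simp add: numeral_2_eq_2)
      have lz: "(0::nat) < length p" "(2::nat) < length p" using l3 by auto
      have d02: "p!0 \<noteq> p!2" using path_distinct[OF P lz] by fastforce
      have lz1: "(1::nat) < length p" using l3 by auto
      have V012: "p!0 \<in> V" "p!1 \<in> V" "p!2 \<in> V" using path_V[OF P lz(1)] path_V[OF P lz1] path_V[OF P lz(2)] by auto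
      have p1: "p!1 = c"
      proof (rule ccontr)
        assume h: "p!1 \<noteq> c"
        obtain v0 where "{p!0, p!1} = {c,v0}" using e0 memE by blast
        hence "p!0 = c" using h by (auto simp: doubleton_eq_iff)
        moreover obtain v2 where "{p!1, p!2} = {c,v2}" using e1 memE by blast
        hence "p!2 = c" using h by (auto simp: doubleton_eq_iff)
        ultimately show False using d02 by simp
      qed
      have "p!0 \<noteq> c" "p!2 \<noteq> c" using edge_props[OF sg e0] edge_props[OF sg e1] p1 by auto
      hence dd: "deg V E (p!0) = 1" "deg V E (p!2) = 1" "deg V E (p!1) \<ge> 2"
        using dl V012 p1 dc2 by auto
      have "sorted (map (deg V E) p) \<or> sorted (rev (map (deg V E) p))"
        using p(1) unfolding deg_monotone_path_def by simp
      thus False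
      proof
        assume "sorted (map (deg V E) p)"
        hence "(map (deg V E) p)!1 \<le> (map (deg V E) p)!2" using sorted_nth_mono[of "map (deg V E) p" 1 2] lz by simp
        thus False using dd l3 by simp
      next
        assume "sorted (rev (map (deg V E) p))"
        hence "(map (deg V E) p)!1 \<le> (map (deg V E) p)!0" using sorted_rev_nth_mono[of "map (deg V E) p" 0 1] lz1 lz(1) by simp
        thus False using dd lz lz1 by simp
      qed
    qed
  qed
  define E' where "E' = insert {a,b} E"
  have abE: "{a,b} \<notin> E" using ab by simp
  have d': "deg V E' v = deg V E v + (if v = a \<or> v = b then 1 else 0)" for v
    unfolding E'_def using deg_insert[OF fin _ abE aV bV] ab by blast
  have "deg_monotone_path V E' [a,b,c]"
    unfolding deg_monotone_path_def
  proof
    have "{b,c} \<in> E" using cE[OF bV bc] by (simp add: insert_commute)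
    thus "is_path V E' [a, b, c]" unfolding is_path_def E'_def using aV bV cV ab ac bc
      by (auto simp: less_Suc_eq nth_Cons')
    show "sorted (map (deg V E') [a, b, c]) \<or> sorted (rev (map (deg V E') [a, b, c]))"
      using d' dl[OF aV ac] dl[OF bV bc] ac bc dc2 by auto
  qed
  hence "3 \<le> mp V E'" using mp_ge[OF fin] by fastforce
  thus "mp V E < mp V (insert {a, b} E)" using le2 E'_def by simp
qed



theorem corollary2p3:
  fixes V :: "'a set" and E :: "'a set set"
  assumes "tree V E" and "card V \<ge> 3"
  shows "saturated V E \<longleftrightarrow> is_star V E"
proof
  assume sat: "saturated V E"
  show "is_star V E"
  proof (rule ccontr)
    assume ns: "\<not> is_star V E"
    obtain x u w where h: "x \<in> V" "\<forall>v\<in>V. deg V E v \<le> deg V E x" "deg V E x \<ge> 2" "u \<in> V"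
      "deg V E u = 1" "{u,w} \<in> E" "{u,x} \<notin> E" "u \<noteq> x"
      using exists_leaf[OF assms ns] by blast
    have "mp V (insert {u,x} E) \<le> mp V E" using mp_insert_le[OF assms(1) h] .
    moreover have "u \<noteq> x \<and> {u,x} \<notin> E" using h by simp
    hence "mp V (insert {u,x} E) > mp V E" using sat[unfolded saturated_def] h(1,4) by blast
    ultimately show False by simp
  qed
next
  assume "is_star V E"
  then obtain c where c: "c \<in> V" "E = {{c, v} |v. v \<in> V - {c}}" unfolding is_star_def by blast
  have "simple_graph V E" using assms unfolding tree_def by simp
  from star_saturated[OF this c assms(2)] show "saturated V E" .
qed


end
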